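(* A well-founded order $P$ is up-regular if and only if for every trunk $T$ of $P$ such that the set of levels of $P$ meeting $T$ has a largest element $h$, the set $T\cup L_h$ is a trunk, where $L_h=\{x:\mathrm{Level}(x)=h\}$. In particular, in an up-regular well-founded order, every trunk that is maximal under inclusion and meets a highest level $L_h$ contains $L_h$.
   Context: Orders are partial orders; $x\sim y$ means $x\ne y$ and $x,y$ incomparable. For a well-founded order $P$, $\mathrm{Level}(x)=\sup\{\mathrm{Level}(y)+1:y<x\}$. An element $x$ is up-regular if for all $y,z$ with $\mathrm{Level}(x)<\mathrm{Level}(y)=\mathrm{Level}(z)$ we have $x<y\iff x<z$; $P$ is up-regular if all its elements are. A trunk of $P$ is a subset $T$ such that for pairwise distinct $x,y,z\in T$, $x\sim y$ and $y\sim z$ imply $x\sim z$. *)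

theory Defs
  imports Main
begin

definition incomp :: "'a::order \<Rightarrow> 'a \<Rightarrow> bool" (infix "\<sim>\<^sub>P" 50) where
  "x \<sim>\<^sub>P y \<longleftrightarrow> x \<noteq> y \<and> \<not> x \<le> y \<and> \<not> y \<le> x"

text \<open>For a well-founded order,
  Level x \<le> Level y  iff  for every x' < x there is y' < y with Level x' \<le> Level y'
  (since Level y = sup{Level y' + 1 : y' < y}). As the order is well-founded,
  this recursion (on the first argument) has a unique solution, given by the
  inductive definition below.\<close>
inductive level_le :: "'a::order \<Rightarrow> 'a \<Rightarrow> bool" where
  level_leI: "(\<And>x'. x' < x \<Longrightarrow> \<exists>y'. y' < y \<and> level_le x' y') \<Longrightarrow> level_le x y"

definition level_less :: "'a::order \<Rightarrow> 'a \<Rightarrow> bool" where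
  "level_less x y \<longleftrightarrow> \<not> level_le y x"

definition level_eq :: "'a::order \<Rightarrow> 'a \<Rightarrow> bool" where
  "level_eq x y \<longleftrightarrow> level_le x y \<and> level_le y x"

definition level_set :: "'a::order \<Rightarrow> 'a set" where
  "level_set h = {x. level_eq x h}"

definition up_regular_elem :: "'a::order \<Rightarrow> bool" where
  "up_regular_elem x \<longleftrightarrow>
     (\<forall>y z. level_less x y \<and> level_eq y z \<longrightarrow> (x < y \<longleftrightarrow> x < z))"

definition up_regular :: "'a::order itself \<Rightarrow> bool" where
  "up_regular _ \<longleftrightarrow> (\<forall>x::'a. up_regular_elem x)"

definition trunk :: "'a::order set \<Rightarrow> bool" where
  "trunk T \<longleftrightarrow> (\<forall>x\<in>T. \<forall>y\<in>T. \<forall>z\<in>T. x \<noteq> y \<and> y \<noteq> z \<and> x \<noteq> z \<and>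
      x \<sim>\<^sub>P y \<and> y \<sim>\<^sub>P z \<longrightarrow> x \<sim>\<^sub>P z)"

definition maximal_trunk :: "'a::order set \<Rightarrow> bool" where
  "maximal_trunk T \<longleftrightarrow> trunk T \<and> (\<forall>S. trunk S \<and> T \<subseteq> S \<longrightarrow> S = T)"

end

theory Submission
  imports Defs
begin

lemma ll_iff: "level_le x y \<longleftrightarrow> (\<forall>x'. x' < x \<longrightarrow> (\<exists>y'. y' < y \<and> level_le x' y'))"
  by (subst level_le.simps) blast

lemma ll_refl:
  assumes wf: "wf {(x, y). x < (y::'a::order)}"
  shows "level_le x (x::'a)"
  using wf
proof (induction x rule: wf_induct_rule)
  case (less x) then show ?case by (subst ll_iff) auto
qed

lemma ll_trans:
  assumes wf: "wf {(x, y). x < (y::'a::order)}"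
  shows "level_le x y \<Longrightarrow> level_le y z \<Longrightarrow> level_le (x::'a) z"
  using wf
proof (induction x arbitrary: y z rule: wf_induct_rule)
  case (less x)
  show ?case
  proof (subst ll_iff, intro allI impI)
    fix x' assume "x' < x"
    then obtain y' where y': "y' < y" "level_le x' y'" using less(2) ll_iff by blast
    then obtain z' where "z' < z" "level_le y' z'" using less(3) ll_iff by blast
    then show "\<exists>z'. z' < z \<and> level_le x' z'" using less(1) \<open>x' < x\<close> y' by blast
  qed
qed

lemma ll_total:
  assumes wf: "wf {(x, y). x < (y::'a::order)}"
  shows "level_le x y \<or> level_le y (x::'a)"
  using wf
proof (induction x arbitrary: y rule: wf_induct_rule)
  case (less x)
  show ?case
  proof (rule ccontr)
    assume "\<not> ?case"
    then obtain x' y0 where "x' < x" "\<forall>y'. y' < y \<longrightarrow> \<not> level_le x' y'"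
      "y0 < y" "\<forall>x''. x'' < x \<longrightarrow> \<not> level_le y0 x''"
      using ll_iff by metis
    then show False using less[of x' y0] by auto
  qed
qed

lemma ll_not_down:
  assumes wf: "wf {(x, y). x < (y::'a::order)}"
  shows "level_le x y \<Longrightarrow> y < (x::'a) \<Longrightarrow> False"
  using wf
proof (induction x arbitrary: y rule: wf_induct_rule)
  case (less x)
  then obtain y' where "y' < y" "level_le y y'" using ll_iff by blast
  then show ?case using less by blast
qed

lemma less_level:
  assumes wf: "wf {(x, y). x < (y::'a::order)}"
  shows "x < y \<Longrightarrow> level_less x (y::'a)"
  unfolding level_less_def using ll_not_down[OF wf] ll_iff by blast

lemma le_level:
  assumes wf: "wf {(x, y). x < (y::'a::order)}"
  shows "x \<le> y \<Longrightarrow> level_le x (y::'a)"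
  using ll_refl[OF wf] ll_iff[of x y] by (meson less_le_trans)

lemma same_level_incomp:
  assumes wf: "wf {(x, y). x < (y::'a::order)}"
  shows "level_eq x y \<Longrightarrow> x \<noteq> y \<Longrightarrow> x \<sim>\<^sub>P (y::'a)"
  unfolding incomp_def level_eq_def using less_level[OF wf] unfolding level_less_def
  by (metis order.not_eq_order_implies_strict)

lemma incomp_sym: "x \<sim>\<^sub>P y \<Longrightarrow> y \<sim>\<^sub>P x"
  unfolding incomp_def by auto

theorem mainTheorem12:
  assumes wf: "wf {(x, y). x < (y::'a::order)}"
  shows "(up_regular TYPE('a) \<longleftrightarrow>
           (\<forall>(T::'a set) h. trunk T \<and> h \<in> T \<and> (\<forall>t\<in>T. level_le t h)
                  \<longrightarrow> trunk (T \<union> level_set h)))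
       \<and> (up_regular TYPE('a) \<longrightarrow>
           (\<forall>(T::'a set) h. maximal_trunk T \<and> h \<in> T \<and> (\<forall>t\<in>T. level_le t h)
                  \<longrightarrow> level_set h \<subseteq> T))"
proof -
  note refl = ll_refl[OF wf] and trans = ll_trans[OF wf] and total = ll_total[OF wf]
  note sl = same_level_incomp[OF wf] and ll = less_level[OF wf] and le = le_level[OF wf]
  have fwd: "trunk (T \<union> level_set h)"
    if ur: "up_regular TYPE('a)" and tT: "trunk T" and hT: "h \<in> T"
      and bnd: "\<forall>t\<in>T. level_le t h" for T :: "'a set" and h
  proof -
    have key: "t \<sim>\<^sub>P u \<longleftrightarrow> t \<sim>\<^sub>P h"
      if "t \<in> T" "t \<notin> level_set h" "u \<in> level_set h" for t u
    proof -
      have lt: "level_less t h" using that bnd unfolding level_set_def level_eq_def level_less_def by auto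
      have eu: "level_eq u h" using that unfolding level_set_def by auto
      have ltu: "level_less t u" using lt eu trans unfolding level_less_def level_eq_def by blast
      have "t \<noteq> u" "t \<noteq> h" using that refl unfolding level_set_def level_eq_def by auto
      moreover have "\<not> u \<le> t" "\<not> h \<le> t" using le ltu lt unfolding level_less_def by auto
      moreover have "t < u \<longleftrightarrow> t < h" using ur ltu eu unfolding up_regular_def up_regular_elem_def by blast
      ultimately show ?thesis unfolding incomp_def using order.order_iff_strict by auto
    qed
    have hL: "h \<in> level_set h" using refl unfolding level_set_def level_eq_def by auto
    have topinc: "x \<sim>\<^sub>P z" if "x \<in> level_set h" "z \<in> level_set h" "x \<noteq> z" for x z
      using that sl trans unfolding level_set_def level_eq_def by blast
    show ?thesis unfolding trunk_def
    proof (intro ballI impI)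
      fix x y z assume mem: "x \<in> T \<union> level_set h" "y \<in> T \<union> level_set h" "z \<in> T \<union> level_set h"
        and H: "x \<noteq> y \<and> y \<noteq> z \<and> x \<noteq> z \<and> x \<sim>\<^sub>P y \<and> y \<sim>\<^sub>P z"
      have tr: "a \<sim>\<^sub>P c" if "a \<in> T" "b \<in> T" "c \<in> T" "a \<noteq> b" "b \<noteq> c" "a \<noteq> c"
          "a \<sim>\<^sub>P b" "b \<sim>\<^sub>P c" for a b c
        using tT that unfolding trunk_def by blast
      show "x \<sim>\<^sub>P z"
      proof (cases "x \<in> level_set h")
        case xt: True
        show ?thesis
        proof (cases "z \<in> level_set h")
          case True then show ?thesis using xt H topinc by blast
        next
          case zl: False
          then have zT: "z \<in> T" using mem by auto
          have "z \<sim>\<^sub>P h"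
          proof (cases "y \<in> level_set h")
            case True then show ?thesis using key[OF zT zl True] H incomp_sym by blast
          next
            case False
            then have yT: "y \<in> T" using mem by auto
            have "y \<sim>\<^sub>P h" using key[OF yT False xt] H incomp_sym by blast
            moreover have "y \<noteq> h" "z \<noteq> h" using False zl hL by auto
            ultimately show ?thesis using tr[OF hT yT zT] H incomp_sym by blast
          qed
          then show ?thesis using key[OF zT zl xt] incomp_sym by blast
        qed
      next
        case xl: False
        then have xT: "x \<in> T" using mem by auto
        show ?thesis
        proof (cases "z \<in> level_set h")
          case zt: True
          have "x \<sim>\<^sub>P h"
          proof (cases "y \<in> level_set h")
            case True then show ?thesis using key[OF xT xl True] H by blast
          next
            case False
            then have yT: "y \<in> T" using mem by auto
            have "y \<sim>\<^sub>P h" using key[OF yT False zt] H by blast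
            moreover have "y \<noteq> h" "x \<noteq> h" using False xl hL by auto
            ultimately show ?thesis using tr[OF xT yT hT] H by blast
          qed
          then show ?thesis using key[OF xT xl zt] by blast
        next
          case zl: False
          then have zT: "z \<in> T" using mem by auto
          show ?thesis
          proof (cases "y \<in> level_set h")
            case True
            have "x \<sim>\<^sub>P h" "z \<sim>\<^sub>P h" using key[OF xT xl True] key[OF zT zl True] H incomp_sym by blast+
            moreover have "x \<noteq> h" "z \<noteq> h" using xl zl hL by auto
            ultimately show ?thesis using tr[OF xT hT zT] H incomp_sym by blast
          next
            case False
            then show ?thesis using tr[OF xT _ zT] H mem by blast
          qed
        qed
      qed
    qed
  qed
  have bwd: "up_regular TYPE('a)"
    if P: "\<forall>(T::'a set) h. trunk T \<and> h \<in> T \<and> (\<forall>t\<in>T. level_le t h)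
                  \<longrightarrow> trunk (T \<union> level_set h)"
  proof -
    have one: "x < z" if "level_less x y" "level_eq y z" "x < y" for x y z :: 'a
    proof (rule ccontr)
      assume nxz: "\<not> x < z"
      have lxz: "level_less x z" using that trans unfolding level_less_def level_eq_def by blast
      have "level_le x z" using lxz total unfolding level_less_def by blast
      moreover have "trunk {x, z}" unfolding trunk_def by auto
      ultimately have TR: "trunk ({x, z} \<union> level_set z)"
        using P refl by blast
      moreover have yL: "y \<in> level_set z" using that unfolding level_set_def by auto
      moreover have "x \<noteq> z" using lxz refl unfolding level_less_def by auto
      moreover have "x \<sim>\<^sub>P z" using \<open>x \<noteq> z\<close> nxz lxz le unfolding incomp_def level_less_def by auto
      moreover have "y \<noteq> z" using nxz that by auto
      moreover have "z \<sim>\<^sub>P y" using sl that \<open>y \<noteq> z\<close> incomp_sym by blast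
      moreover have "x \<noteq> y" using that by auto
      ultimately have "x \<sim>\<^sub>P y"
        using TR[unfolded trunk_def, rule_format, of x z y] by blast
      then show False using that unfolding incomp_def by auto
    qed
    show ?thesis unfolding up_regular_def up_regular_elem_def
    proof (intro allI impI)
      fix x y z :: 'a assume a: "level_less x y \<and> level_eq y z"
      then have "level_less x z" "level_eq z y"
        using trans unfolding level_less_def level_eq_def by blast+
      then show "x < y \<longleftrightarrow> x < z" using one a by blast
    qed
  qed
  show ?thesis
  proof (intro conjI iffI allI impI)
    show "trunk (T \<union> level_set h)" if "up_regular TYPE('a)"
      "trunk T \<and> h \<in> T \<and> (\<forall>t\<in>T. level_le t h)" for T :: "'a set" and h
      using fwd that by blast
  next
    show "up_regular TYPE('a)" if "\<forall>(T::'a set) h. trunk T \<and> h \<in> T \<and> (\<forall>t\<in>T. level_le t h)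
                  \<longrightarrow> trunk (T \<union> level_set h)"
      by (rule bwd[OF that])
  next
    fix T :: "'a set" and h assume A: "up_regular TYPE('a)" "maximal_trunk T \<and> h \<in> T \<and> (\<forall>t\<in>T. level_le t h)"
    then have "trunk (T \<union> level_set h)" using fwd[OF A(1)] unfolding maximal_trunk_def by blast
    then have "T \<union> level_set h = T" using A(2) unfolding maximal_trunk_def by blast
    then show "level_set h \<subseteq> T" by blast
  qed
qed

end
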